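(* Let $(G,+)$ be a finite abelian group with identity $0$, and let $\cdot$ be a binary operation on $G$ making $(G,+,\cdot)$ a commutative associative (not necessarily unital) ring in which every element has an inverse under the circle operation $x\circ y=x+y+x\cdot y$. For $g\in G$ define $\tau_g:G\to G$ by $\tau_g(x)=g\circ x$, and let $T=\{\tau_g: g\in G\}$, a regular abelian subgroup of $\mathrm{Hol}(G)$. Then for each prime $p$ dividing $|G|$, the Sylow $p$-subgroup of $T$ is $T_p=\{\tau_g: g\in G_p\}$, where $G_p$ is the Sylow $p$-subgroup of $(G,+)$.
   Context: $\mathrm{Hol}(G)=\rho(G)\cdot\mathrm{Aut}(G)\subseteq\mathrm{Perm}(G)$ is the holomorph of $G$, with group operation composition of permutations. Under the hypotheses, $(G,\circ)$ is an abelian group with identity $0$, and $T$ (under composition) is a regular abelian subgroup of $\mathrm{Hol}(G)$, with $\tau_g\circ\tau_h=\tau_{g\circ h}$. *)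

theory Defs
  imports "HOL-Algebra.Coset" "HOL-Computational_Algebra.Primes"
begin

definition sylow_subgroup :: "('a, 'b) monoid_scheme \<Rightarrow> nat \<Rightarrow> 'a set \<Rightarrow> bool" where
  "sylow_subgroup G p H \<longleftrightarrow> subgroup H G \<and> card H = p ^ multiplicity p (order G)"

definition add_grp :: "'a::ab_group_add monoid" where
  "add_grp = \<lparr>carrier = UNIV, monoid.mult = (+), monoid.one = 0\<rparr>"

definition circ :: "'a::comm_ring \<Rightarrow> 'a \<Rightarrow> 'a" where
  "circ x y = x + y + x * y"

definition tau :: "'a::comm_ring \<Rightarrow> ('a \<Rightarrow> 'a)" where
  "tau g = (\<lambda>x. circ g x)"

definition T_grp :: "('a::comm_ring \<Rightarrow> 'a) monoid" where
  "T_grp = \<lparr>carrier = range tau, monoid.mult = (\<circ>), monoid.one = id\<rparr>"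

end

theory Submission
  imports Defs "HOL-Algebra.Multiplicative_Group"
begin

lemma (in comm_group) key:
  assumes fin: "finite (carrier G)" and p: "prime p" and P: "subgroup P G"
    and cP: "card P = p ^ multiplicity p (order G)"
    and x: "x \<in> carrier G" and xp: "x [^] (p ^ k :: nat) = \<one>"
  shows "x \<in> P"
proof -
  interpret N: normal P G using subgroup_imp_normal[OF P] .
  interpret Q: group "G Mod P" by (rule N.factorgroup_is_group)
  define X where "X = P #> x"
  have XQ: "X \<in> carrier (G Mod P)" unfolding X_def carrier_FactGroup using x by blast
  have "X [^]\<^bsub>G Mod P\<^esub> (p ^ k) = P #> (x [^] (p ^ k))"
    unfolding X_def using N.FactGroup_pow x by blast
  also have "\<dots> = \<one>\<^bsub>G Mod P\<^esub>" using xp by (simp add: P subgroup.subset)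
  finally have "Q.ord X dvd p ^ k" using Q.pow_eq_id XQ by blast
  moreover have "Q.ord X dvd order (G Mod P)" using Q.ord_dvd_group_order XQ by blast
  moreover have cop: "coprime (order (G Mod P)) (p ^ k)"
  proof -
    have lag: "order (G Mod P) * card P = order G"
      using lagrange[OF P] unfolding order_def FactGroup_def by simp
    have G0: "order G \<noteq> 0" using fin order_gt_0_iff_finite by auto
    have "\<not> p dvd order (G Mod P)"
    proof
      assume "p dvd order (G Mod P)"
      then have "p ^ Suc (multiplicity p (order G)) dvd order G"
        using lag cP by (metis mult.commute mult_dvd_mono power_Suc dvd_refl)
      then show False using G0 p
        by (metis Suc_n_not_le_n not_prime_unit power_dvd_iff_le_multiplicity)
    qed
    then have "coprime (order (G Mod P)) p" using p
      by (metis coprime_commute prime_imp_coprime)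
    then show ?thesis by simp
  qed
  ultimately have "Q.ord X = 1"
    by (metis coprime_common_divisor_nat coprime_commute)
  then have "X = P" using Q.ord_eq_1 XQ by simp
  then show ?thesis using rcos_self x P X_def by metis
qed

lemma circ_assoc: "circ (circ a b) c = circ a (circ b (c::'a::comm_ring))"
  unfolding circ_def by (simp add: algebra_simps)
lemma circ_comm: "circ a b = circ b (a::'a::comm_ring)"
  unfolding circ_def by (simp add: algebra_simps)
lemma tau_comp: "tau a \<circ> tau b = tau (circ a (b::'a::comm_ring))"
  unfolding tau_def by (auto simp: circ_assoc)
lemma tau0: "tau (0::'a::comm_ring) = id"
  unfolding tau_def circ_def by auto
lemma tau_inj: "inj (tau :: 'a::comm_ring \<Rightarrow> _)"
proof
  fix a b :: 'a assume "tau a = tau b"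
  then have "tau a 0 = tau b 0" by simp
  then show "a = b" unfolding tau_def circ_def by simp
qed

lemma T_comm_group:
  assumes circ_inv: "\<forall>x::'a::comm_ring. \<exists>y. circ x y = 0"
  shows "comm_group (T_grp :: ('a \<Rightarrow> 'a) monoid)"
proof (rule comm_groupI)
  show "\<And>x y. x \<in> carrier (T_grp::('a \<Rightarrow> 'a) monoid) \<Longrightarrow> y \<in> carrier T_grp \<Longrightarrow> x \<otimes>\<^bsub>T_grp\<^esub> y \<in> carrier T_grp"
    unfolding T_grp_def by (auto simp: tau_comp)
  show "\<one>\<^bsub>T_grp\<^esub> \<in> carrier (T_grp::('a \<Rightarrow> 'a) monoid)"
    unfolding T_grp_def using tau0 by (metis monoid.select_convs(2) partial_object.select_convs(1) rangeI)
  show "\<And>x y z. x \<in> carrier (T_grp::('a \<Rightarrow> 'a) monoid) \<Longrightarrow> y \<in> carrier T_grp \<Longrightarrow> z \<in> carrier T_grp \<Longrightarrow>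
     x \<otimes>\<^bsub>T_grp\<^esub> y \<otimes>\<^bsub>T_grp\<^esub> z = x \<otimes>\<^bsub>T_grp\<^esub> (y \<otimes>\<^bsub>T_grp\<^esub> z)"
    unfolding T_grp_def by (auto simp: o_assoc)
  show "\<And>x y. x \<in> carrier (T_grp::('a \<Rightarrow> 'a) monoid) \<Longrightarrow> y \<in> carrier T_grp \<Longrightarrow> x \<otimes>\<^bsub>T_grp\<^esub> y = y \<otimes>\<^bsub>T_grp\<^esub> x"
    unfolding T_grp_def by (auto simp: tau_comp circ_comm)
  show "\<And>x. x \<in> carrier (T_grp::('a \<Rightarrow> 'a) monoid) \<Longrightarrow> \<one>\<^bsub>T_grp\<^esub> \<otimes>\<^bsub>T_grp\<^esub> x = x"
    unfolding T_grp_def by auto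
  show "\<And>x. x \<in> carrier (T_grp::('a \<Rightarrow> 'a) monoid) \<Longrightarrow> \<exists>y\<in>carrier T_grp. y \<otimes>\<^bsub>T_grp\<^esub> x = \<one>\<^bsub>T_grp\<^esub>"
  proof -
    fix x assume "x \<in> carrier (T_grp::('a \<Rightarrow> 'a) monoid)"
    then obtain a where a: "x = tau a" unfolding T_grp_def by auto
    obtain b where "circ a b = 0" using circ_inv by blast
    then have "tau b \<circ> tau a = id" by (simp add: tau_comp circ_comm tau0)
    then show "\<exists>y\<in>carrier T_grp. y \<otimes>\<^bsub>T_grp\<^esub> x = \<one>\<^bsub>T_grp\<^esub>"
      unfolding T_grp_def a by auto
  qed
qed

lemma add_grp_comm_group: "comm_group (add_grp :: 'a::ab_group_add monoid)"
  unfolding add_grp_def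
  by (rule comm_groupI) (auto simp: algebra_simps intro: exI[of _ "- x" for x])

lemma add_grp_pow0: "x [^]\<^bsub>(add_grp :: 'a::ab_group_add monoid)\<^esub> (0::nat) = 0"
  by (simp add: add_grp_def)
lemma add_grp_powS: "x [^]\<^bsub>(add_grp :: 'a::ab_group_add monoid)\<^esub> (Suc n) = x [^]\<^bsub>add_grp\<^esub> n + x"
  by (simp add: nat_pow_def add_grp_def)
lemma add_grp_pow_add: "(x + y) [^]\<^bsub>(add_grp :: 'a::ab_group_add monoid)\<^esub> (n::nat) = x [^]\<^bsub>add_grp\<^esub> n + y [^]\<^bsub>add_grp\<^esub> n"
  by (induction n) (simp_all only: add_grp_pow0 add_grp_powS, simp_all add: algebra_simps)
lemma add_grp_pow_neg: "(- x) [^]\<^bsub>(add_grp :: 'a::ab_group_add monoid)\<^esub> (n::nat) = - (x [^]\<^bsub>add_grp\<^esub> n)"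
  by (induction n) (simp_all only: add_grp_pow0 add_grp_powS, simp_all add: algebra_simps)
lemma add_grp_pow_mult: "(x * r) [^]\<^bsub>(add_grp :: 'a::comm_ring monoid)\<^esub> (n::nat) = (x [^]\<^bsub>add_grp\<^esub> n) * r"
  by (induction n) (simp_all only: add_grp_pow0 add_grp_powS, simp_all add: algebra_simps)

lemma subgroup_pow_card:
  assumes "group G" "subgroup H G" "finite H" "x \<in> H"
  shows "x [^]\<^bsub>G\<^esub> card H = \<one>\<^bsub>G\<^esub>"
proof -
  interpret G: group G by fact
  interpret K: group "G\<lparr>carrier := H\<rparr>" using G.subgroup_imp_group[OF assms(2)] .
  have "x [^]\<^bsub>G\<lparr>carrier := H\<rparr>\<^esub> order (G\<lparr>carrier := H\<rparr>) = \<one>\<^bsub>G\<lparr>carrier := H\<rparr>\<^esub>"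
    using K.pow_order_eq_1 assms(4) by simp
  then show ?thesis unfolding order_def by (simp add: G.nat_pow_consistent[symmetric])
qed

theorem corollary5p3:
  fixes p :: nat and Gp :: "'a::{comm_ring, finite} set"
  assumes circ_inv: "\<forall>x::'a. \<exists>y. circ x y = 0"
    and "prime p" and "p dvd card (UNIV :: 'a set)"
    and "sylow_subgroup (add_grp :: 'a monoid) p Gp"
  shows "sylow_subgroup (T_grp :: ('a \<Rightarrow> 'a) monoid) p (tau ` Gp)
         \<and> (\<forall>S. sylow_subgroup (T_grp :: ('a \<Rightarrow> 'a) monoid) p S \<longrightarrow> S = tau ` Gp)"
proof -
  note p = \<open>prime p\<close>
  note sy = \<open>sylow_subgroup (add_grp :: 'a monoid) p Gp\<close>
  interpret A: comm_group "add_grp :: 'a monoid" by (rule add_grp_comm_group)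
  interpret TG: comm_group "T_grp :: ('a \<Rightarrow> 'a) monoid" by (rule T_comm_group[OF circ_inv])
  define m where "m = multiplicity p (order (add_grp :: 'a monoid))"
  define N where "N = p ^ m"
  have carrA: "carrier (add_grp :: 'a monoid) = UNIV" by (simp add: add_grp_def)
  have carrT: "carrier (T_grp :: ('a \<Rightarrow> 'a) monoid) = range tau" by (simp add: T_grp_def)
  have finA: "finite (carrier (add_grp :: 'a monoid))" using carrA by simp
  have finT: "finite (carrier (T_grp :: ('a \<Rightarrow> 'a) monoid))" using carrT by simp
  have ordT: "order (T_grp :: ('a \<Rightarrow> 'a) monoid) = order (add_grp :: 'a monoid)"
    unfolding order_def carrA carrT using tau_inj card_image by blast
  have GpS: "subgroup Gp add_grp" and cGp: "card Gp = N"
    using sy unfolding sylow_subgroup_def m_def N_def by auto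
  have finGp: "finite Gp" by simp
  have Gp_char: "x \<in> Gp \<longleftrightarrow> x [^]\<^bsub>(add_grp :: 'a monoid)\<^esub> N = 0" for x
  proof
    assume "x \<in> Gp"
    then show "x [^]\<^bsub>(add_grp :: 'a monoid)\<^esub> N = 0"
      using subgroup_pow_card[OF A.is_group GpS finGp] cGp by (simp add: add_grp_def)
  next
    assume "x [^]\<^bsub>(add_grp :: 'a monoid)\<^esub> N = 0"
    then show "x \<in> Gp"
      using A.key[OF finA p GpS, of x m] cGp unfolding N_def m_def by (simp add: carrA add_grp_def)
  qed
  have circ_cl: "circ x y \<in> Gp" if "x \<in> Gp" "y \<in> Gp" for x y
    using that unfolding Gp_char circ_def by (simp add: add_grp_pow_add add_grp_pow_mult)
  have inv_cl: "y \<in> Gp" if "x \<in> Gp" "circ x y = 0" for x y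
  proof -
    have "y = - x + (- (x * y))" using that(2) unfolding circ_def
      by (simp add: algebra_simps eq_neg_iff_add_eq_0 add.assoc)
    then have "y [^]\<^bsub>(add_grp :: 'a monoid)\<^esub> N = (- x + (- (x * y))) [^]\<^bsub>(add_grp :: 'a monoid)\<^esub> N"
      by simp
    also have "\<dots> = - (x [^]\<^bsub>(add_grp :: 'a monoid)\<^esub> N) + - ((x [^]\<^bsub>(add_grp :: 'a monoid)\<^esub> N) * y)"
      by (simp only: add_grp_pow_add add_grp_pow_mult add_grp_pow_neg)
    also have "\<dots> = 0" using that(1) unfolding Gp_char by simp
    finally show ?thesis unfolding Gp_char .
  qed
  have zGp: "0 \<in> Gp" using subgroup.one_closed[OF GpS] by (simp add: add_grp_def)
  have sub: "subgroup (tau ` Gp) T_grp"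
  proof (rule TG.subgroupI)
    show "tau ` Gp \<subseteq> carrier T_grp" using carrT by auto
    show "tau ` Gp \<noteq> {}" using zGp by auto
    show "inv\<^bsub>T_grp\<^esub> a \<in> tau ` Gp" if aG: "a \<in> tau ` Gp" for a
    proof -
      obtain x where x: "x \<in> Gp" "a = tau x" using aG by auto
      obtain y where y: "circ x y = 0" using circ_inv by blast
      have "tau y \<otimes>\<^bsub>T_grp\<^esub> tau x = \<one>\<^bsub>T_grp\<^esub>"
        using y by (simp add: T_grp_def tau_comp circ_comm tau0)
      then have "inv\<^bsub>T_grp\<^esub> (tau x) = tau y"
        using TG.inv_equality carrT by auto
      then show ?thesis using x inv_cl[OF x(1) y] by auto
    qed
    show "a \<otimes>\<^bsub>T_grp\<^esub> b \<in> tau ` Gp" if "a \<in> tau ` Gp" "b \<in> tau ` Gp" for a b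
      using that circ_cl by (auto simp: T_grp_def tau_comp)
  qed
  have ctau: "card (tau ` Gp) = p ^ multiplicity p (order (T_grp :: ('a \<Rightarrow> 'a) monoid))"
    using tau_inj cGp unfolding ordT N_def m_def by (metis card_image inj_on_subset subset_UNIV)
  have part1: "sylow_subgroup (T_grp :: ('a \<Rightarrow> 'a) monoid) p (tau ` Gp)"
    unfolding sylow_subgroup_def using sub ctau by simp
  have part2: "S = tau ` Gp" if "sylow_subgroup (T_grp :: ('a \<Rightarrow> 'a) monoid) p S" for S
  proof -
    have SS: "subgroup S T_grp" and cS: "card S = N"
      using that unfolding sylow_subgroup_def N_def m_def ordT by auto
    have finS: "finite S" using finT SS subgroup.subset finite_subset by blast
    have "S \<subseteq> tau ` Gp"
    proof
      fix s assume s: "s \<in> S"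
      have "s [^]\<^bsub>T_grp\<^esub> (p ^ m) = \<one>\<^bsub>T_grp\<^esub>"
        using subgroup_pow_card[OF TG.is_group SS finS s] cS N_def by simp
      then show "s \<in> tau ` Gp"
        using TG.key[OF finT p sub ctau, of s m] s SS subgroup.subset by blast
    qed
    moreover have "card S = card (tau ` Gp)" using cS ctau ordT N_def m_def by simp
    ultimately show ?thesis using card_subset_eq by (metis finite_imageI finGp)
  qed
  show ?thesis using part1 part2 by blast
qed

end
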